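(* Let $k \geq 2$ be an integer. (i) For all $k$-admissible integers $n > 1$ such that $n \not\equiv 1 \pmod{k}$, there is a partial $k$-star design of order $n$ with $2\lfloor \frac{n-2}{k}\rfloor$ stars that is not completable. (ii) For all $k$-admissible integers $n > 1$ such that $n \equiv 1 \pmod{k}$, there is a partial $k$-star design of order $n$ with $\frac{2n-2}{k}-1$ stars that is not completable.
   Context: A $k$-star is a copy of $K_{1,k}$. A partial $k$-star design of order $n$ is a pair $(V,\mathcal{A})$ where $V$ is a set of $n$ vertices and $\mathcal{A}$ is a set of edge-disjoint $k$-stars that are subgraphs of the complete graph $K_V$; if every edge of $K_V$ lies in some star of $\mathcal{A}$ it is a $k$-star design. It is completable if there is a $k$-star design $(V,\mathcal{B})$ with $\mathcal{A}\subseteq\mathcal{B}$. A positive integer $n$ is $k$-admissible if $\binom{n}{2}\equiv 0 \pmod{k}$. *)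

theory Defs
  imports Main
begin

definition all_edges :: "'a set \<Rightarrow> 'a set set" where
  "all_edges V = {{x, y} | x y. x \<in> V \<and> y \<in> V \<and> x \<noteq> y}"

definition is_kstar :: "nat \<Rightarrow> 'a set \<Rightarrow> 'a set set \<Rightarrow> bool" where
  "is_kstar k V S \<longleftrightarrow> (\<exists>c L. c \<in> V \<and> L \<subseteq> V \<and> c \<notin> L \<and> finite L \<and> card L = k
      \<and> S = {{c, x} | x. x \<in> L})"

definition partial_star_design :: "nat \<Rightarrow> 'a set \<Rightarrow> 'a set set set \<Rightarrow> bool" where
  "partial_star_design k V A \<longleftrightarrow> finite V \<and> (\<forall>S\<in>A. is_kstar k V S)
      \<and> (\<forall>S\<in>A. \<forall>T\<in>A. S \<noteq> T \<longrightarrow> S \<inter> T = {})"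

definition star_design :: "nat \<Rightarrow> 'a set \<Rightarrow> 'a set set set \<Rightarrow> bool" where
  "star_design k V A \<longleftrightarrow> partial_star_design k V A \<and> \<Union>A = all_edges V"

definition completable :: "nat \<Rightarrow> 'a set \<Rightarrow> 'a set set set \<Rightarrow> bool" where
  "completable k V A \<longleftrightarrow> (\<exists>B. star_design k V B \<and> A \<subseteq> B)"

definition admissible :: "nat \<Rightarrow> nat \<Rightarrow> bool" where
  "admissible k n \<longleftrightarrow> (n choose 2) mod k = 0"

end

theory Submission
  imports Defs
begin

lemma inj_pair: "inj_on (\<lambda>x. {c, x}) L"
  by (auto simp: inj_on_def doubleton_eq_iff)

lemma not_compl:
  fixes V :: "'a set"
  assumes P: "partial_star_design k V A" and uv: "u \<in> V" "v \<in> V" "u \<noteq> v" "{u,v} \<notin> \<Union>A"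
    and cu: "card ((\<lambda>x. {u,x}) ` (V-{u}) - \<Union>A) < k"
    and cv: "card ((\<lambda>x. {v,x}) ` (V-{v}) - \<Union>A) < k"
  shows "\<not> completable k V A"
proof
  assume "completable k V A"
  then obtain B where B: "star_design k V B" "A \<subseteq> B" unfolding completable_def by blast
  have fin: "finite V" using P unfolding partial_star_design_def by blast
  have B1: "\<forall>S\<in>B. is_kstar k V S" and B2: "\<forall>S\<in>B. \<forall>T\<in>B. S \<noteq> T \<longrightarrow> S \<inter> T = {}"
    and B3: "\<Union>B = all_edges V"
    using B(1) unfolding star_design_def partial_star_design_def by auto
  have "{u,v} \<in> all_edges V" using uv unfolding all_edges_def by blast
  then obtain S where S: "S \<in> B" "{u,v} \<in> S" using B3 by blast
  have SA: "S \<notin> A" using S uv by blast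
  have "is_kstar k V S" using B1 S by blast
  then obtain c L where cL: "c \<in> V" "L \<subseteq> V" "c \<notin> L" "finite L" "card L = k" "S = {{c, x} | x. x \<in> L}"
    unfolding is_kstar_def by blast
  have S': "S = (\<lambda>x. {c,x}) ` L" using cL(6) by (simp add: Setcompr_eq_image)
  have dis: "S \<inter> \<Union>A = {}"
  proof -
    have "S \<inter> T = {}" if "T \<in> A" for T
    proof -
      have "T \<in> B" "S \<noteq> T" using that B(2) SA by auto
      then show ?thesis using B2 S(1) by metis
    qed
    then show ?thesis by auto
  qed
  have cardS: "card S = k" using S' cL inj_pair card_image by metis
  have key: "card ((\<lambda>x. {c,x}) ` (V-{c}) - \<Union>A) \<ge> k"
  proof -
    have "S \<subseteq> (\<lambda>x. {c,x}) ` (V-{c}) - \<Union>A"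
    proof
      fix e assume "e \<in> S"
      then obtain y where y: "y \<in> L" "e = {c,y}" using S' by blast
      have "y \<in> V - {c}" using y cL by auto
      moreover have "e \<notin> \<Union>A" using dis \<open>e \<in> S\<close> by blast
      ultimately show "e \<in> (\<lambda>x. {c,x}) ` (V-{c}) - \<Union>A" using y by blast
    qed
    moreover have "finite ((\<lambda>x. {c,x}) ` (V-{c}) - \<Union>A)" using fin by simp
    ultimately show ?thesis using cardS card_mono by metis
  qed
  obtain x where "x \<in> L" "{u,v} = {c,x}" using S cL by blast
  then have "c = u \<or> c = v" by (auto simp: doubleton_eq_iff)
  then show False using key cu cv by auto
qed


definition blk :: "nat \<Rightarrow> nat \<Rightarrow> nat set" where
  "blk k i = {2+i*k..<2+i*k+k}"

definition A0 :: "nat \<Rightarrow> nat \<Rightarrow> nat set set set" where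
  "A0 k a = (\<lambda>(c,i). (\<lambda>x. {c,x}) ` blk k i) ` ({0,1} \<times> {..<a})"

lemma blk_idx: assumes "x \<in> blk k i" shows "(x-2) div k = i"
proof -
  have h: "i*k \<le> x - 2" "x - 2 < i*k + k" using assms unfolding blk_def by auto
  define t where "t = x - 2 - i*k"
  have "x - 2 = i*k + t" "t < k" using h unfolding t_def by auto
  then show ?thesis by simp
qed

lemma in_blk: assumes "k > 0" "2 \<le> x" shows "x \<in> blk k ((x-2) div k)"
proof -
  have "(x-2) div k * k \<le> x - 2" by (simp add: div_times_less_eq_dividend)
  moreover have "x - 2 < (x-2) div k * k + k"
    by (metis assms(1) div_mult_mod_eq mod_less_divisor nat_add_left_cancel_less)
  ultimately have "2 + (x-2) div k * k \<le> x" "x < 2 + (x-2) div k * k + k" using assms by linarith+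
  then show ?thesis unfolding blk_def by simp
qed

lemma blk_card: "card (blk k i) = k" by (simp add: blk_def)

lemma blk_le: assumes "x \<in> blk k i" "i < a" shows "2 \<le> x" "x < 2 + a*k"
proof -
  have "(i+1)*k \<le> a*k" using assms(2) by (intro mult_le_mono1) simp
  then show "2 \<le> x" "x < 2 + a*k" using assms(1) unfolding blk_def by auto
qed

lemma A0_elem: assumes "S \<in> A0 k a"
  obtains c i where "c \<in> {0,1}" "i < a" "S = (\<lambda>x. {c,x}) ` blk k i"
proof -
  obtain p where "p \<in> {0::nat,1} \<times> {..<a}" "S = (case p of (c,i) \<Rightarrow> (\<lambda>x. {c,x}) ` blk k i)"
    using assms unfolding A0_def by blast
  then show ?thesis using that by (cases p) auto
qed

lemma A0_mem:
  assumes "k > 0"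
  shows "e \<in> \<Union>(A0 k a) \<longleftrightarrow> (\<exists>c x. c \<in> {0,1} \<and> 2 \<le> x \<and> x < 2+a*k \<and> e = {c,x})"
proof
  assume "e \<in> \<Union>(A0 k a)"
  then obtain S where S: "S \<in> A0 k a" "e \<in> S" by (rule UnionE)
  obtain c i where ci: "c \<in> {0,1}" "i < a" "S = (\<lambda>x. {c,x}) ` blk k i" using S(1) by (rule A0_elem)
  obtain x where x: "x \<in> blk k i" "e = {c,x}" using S(2) ci(3) by blast
  have "2 \<le> x" "x < 2 + a*k" using blk_le[OF x(1) ci(2)] by auto
  then show "\<exists>c x. c \<in> {0,1} \<and> 2 \<le> x \<and> x < 2+a*k \<and> e = {c,x}" using ci(1) x(2) by blast
next
  assume "\<exists>c x. c \<in> {0,1} \<and> 2 \<le> x \<and> x < 2+a*k \<and> e = {c,x}"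
  then obtain c x where cx: "c \<in> {0,1}" "2 \<le> x" "x < 2+a*k" "e = {c,x}" by blast
  define i where "i = (x-2) div k"
  have ia: "i < a" using cx assms unfolding i_def by (simp add: div_less_iff_less_mult)
  have xb: "x \<in> blk k i" unfolding i_def using in_blk assms cx by blast
  have "(c,i) \<in> {0,1} \<times> {..<a}" using cx(1) ia by simp
  then have "(\<lambda>x. {c,x}) ` blk k i \<in> A0 k a" unfolding A0_def by (rule rev_image_eqI) simp
  moreover have "e \<in> (\<lambda>x. {c,x}) ` blk k i" using cx(4) xb by (rule image_eqI)
  ultimately show "e \<in> \<Union>(A0 k a)" by (rule UnionI)
qed

lemma A0_inter:
  assumes "c \<in> {0,1}" "c' \<in> {0,1}" "(\<lambda>x. {c,x}) ` blk k i \<inter> (\<lambda>x. {c',x}) ` blk k j \<noteq> {}"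
  shows "c = c' \<and> i = j"
proof -
  obtain x y where xy: "x \<in> blk k i" "y \<in> blk k j" "{c,x} = {c',y}" using assms(3) by blast
  have "2 \<le> x" "2 \<le> y" using xy unfolding blk_def by auto
  then have "c = c' \<and> x = y" using xy(3) assms(1,2) by (auto simp: doubleton_eq_iff)
  then show ?thesis using xy blk_idx by metis
qed

lemma A0_card: assumes "k > 0" shows "card (A0 k a) = 2 * a"
proof -
  have "inj_on (\<lambda>(c,i). (\<lambda>x. {c,x}) ` blk k i) ({0,1} \<times> {..<a})"
  proof (rule inj_onI)
    fix p q assume pq: "p \<in> {0::nat,1} \<times> {..<a}" "q \<in> {0::nat,1} \<times> {..<a}"
      "(\<lambda>(c,i). (\<lambda>x. {c,x}) ` blk k i) p = (\<lambda>(c,i). (\<lambda>x. {c,x}) ` blk k i) q"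
    obtain c i where p: "p = (c,i)" by (cases p)
    obtain c' j where q: "q = (c',j)" by (cases q)
    have as: "c \<in> {0::nat,1}" "c' \<in> {0::nat,1}" "(\<lambda>x. {c,x}) ` blk k i = (\<lambda>x. {c',x}) ` blk k j"
      using pq unfolding p q by auto
    have "2+i*k \<in> blk k i" using assms unfolding blk_def by simp
    then have m: "{c, 2+i*k} \<in> (\<lambda>x. {c,x}) ` blk k i" by (rule imageI)
    then have "{c, 2+i*k} \<in> (\<lambda>x. {c,x}) ` blk k i \<inter> (\<lambda>x. {c',x}) ` blk k j"
      using as(3) by (metis IntI)
    then have "(\<lambda>x. {c,x}) ` blk k i \<inter> (\<lambda>x. {c',x}) ` blk k j \<noteq> {}" by (metis empty_iff)
    then have "c = c' \<and> i = j" by (rule A0_inter[OF as(1) as(2)])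
    then show "p = q" unfolding p q by simp
  qed
  then have "card (A0 k a) = card ({0::nat,1} \<times> {..<a})" unfolding A0_def by (rule card_image)
  then show ?thesis by (simp add: card_cartesian_product)
qed

lemma A0_psd: assumes "k > 0" "2 + a*k \<le> n" shows "partial_star_design k {..<n} (A0 k a)"
  unfolding partial_star_design_def
proof (intro conjI ballI impI)
  show "finite {..<n}" by simp
next
  fix S assume "S \<in> A0 k a"
  then obtain c i where ci: "c \<in> {0,1}" "i < a" "S = (\<lambda>x. {c,x}) ` blk k i" by (rule A0_elem)
  have f1: "blk k i \<subseteq> {..<n}"
  proof
    fix x assume "x \<in> blk k i"
    then have "x < 2 + a*k" by (rule blk_le(2)[OF _ ci(2)])
    then show "x \<in> {..<n}" using assms(2) by simp
  qed
  have f2: "c \<notin> blk k i" using ci unfolding blk_def by auto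
  have f3: "c \<in> {..<n}" using ci assms by auto
  have f4: "finite (blk k i)" by (simp add: blk_def)
  have f5: "S = {{c, x} | x. x \<in> blk k i}" using ci(3) by (simp add: Setcompr_eq_image)
  show "is_kstar k {..<n} S" unfolding is_kstar_def
    by (intro exI[of _ c] exI[of _ "blk k i"] conjI f1 f2 f3 f4 f5 blk_card)
next
  fix S T assume "S \<in> A0 k a" "T \<in> A0 k a" "S \<noteq> T"
  obtain c i where c1: "c \<in> {0,1}" "i < a" "S = (\<lambda>x. {c,x}) ` blk k i" using \<open>S \<in> A0 k a\<close> by (rule A0_elem)
  obtain c' j where c2: "c' \<in> {0,1}" "j < a" "T = (\<lambda>x. {c',x}) ` blk k j" using \<open>T \<in> A0 k a\<close> by (rule A0_elem)
  note ct = c1 c2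
  show "S \<inter> T = {}"
  proof (rule ccontr)
    assume "S \<inter> T \<noteq> {}"
    then have "c = c' \<and> i = j" using A0_inter[OF c1(1) c2(1)] ct by simp
    then show False using ct \<open>S \<noteq> T\<close> by simp
  qed
qed

lemma A0_cov: assumes "k > 0" "c \<in> {0,1}" "2 \<le> x" "x < 2 + a*k" shows "{c,x} \<in> \<Union>(A0 k a)"
  using A0_mem[OF assms(1)] assms(2-4) by blast

lemma A0_01: assumes "k > 0" shows "{0,1} \<notin> \<Union>(A0 k a)"
proof
  assume "{0,1} \<in> \<Union>(A0 k a)"
  then obtain c x where "c \<in> {0,1}" "2 \<le> x" "{0::nat,1} = {c,x}" using A0_mem[OF assms] by blast
  then show False by (auto simp: doubleton_eq_iff)
qed

lemma card_unc:
  assumes "U \<subseteq> (\<lambda>x. {c::nat,x}) ` ({1-c} \<union> {w..<n})"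
  shows "card U \<le> 1 + (n - w)"
proof -
  have "card U \<le> card ((\<lambda>x. {c::nat,x}) ` ({1-c} \<union> {w..<n}))" using assms by (intro card_mono) auto
  also have "\<dots> \<le> card ({1-c} \<union> {w..<n})" by (rule card_image_le) simp
  also have "\<dots> \<le> card {1-c} + card {w..<n}" by (rule card_Un_le)
  finally show ?thesis by simp
qed

lemma part1:
  assumes k: "k \<ge> 2" and n: "2 + a*k \<le> n" and r: "n - (2 + a*k) + 1 < k"
  shows "\<exists>(V :: nat set) A. card V = n \<and> partial_star_design k V A
               \<and> card A = 2 * a \<and> \<not> completable k V A"
proof (intro exI conjI)
  have k0: "k > 0" using k by simp
  show "card {..<n} = n" by simp
  show P: "partial_star_design k {..<n} (A0 k a)" using A0_psd k0 n by blast
  show "card (A0 k a) = 2 * a" using A0_card k0 by blast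
  have unc: "card ((\<lambda>x. {c,x}) ` ({..<n}-{c}) - \<Union>(A0 k a)) < k" if c: "c \<in> {0,1}" for c
  proof -
    have "(\<lambda>x. {c,x}) ` ({..<n}-{c}) - \<Union>(A0 k a) \<subseteq> (\<lambda>x. {c::nat,x}) ` ({1-c} \<union> {2+a*k..<n})"
    proof
      fix e assume e: "e \<in> (\<lambda>x. {c,x}) ` ({..<n}-{c}) - \<Union>(A0 k a)"
      then obtain x where x: "x \<in> {..<n}-{c}" "e = {c,x}" by blast
      have "x \<in> {1-c} \<union> {2+a*k..<n}"
      proof (rule ccontr)
        assume "x \<notin> {1-c} \<union> {2+a*k..<n}"
        then have "2 \<le> x" "x < 2 + a*k" using x(1) c by auto
        then have "e \<in> \<Union>(A0 k a)" using A0_cov[OF k0 c] x(2) by blast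
        then show False using e by blast
      qed
      then show "e \<in> (\<lambda>x. {c::nat,x}) ` ({1-c} \<union> {2+a*k..<n})" using x(2) by blast
    qed
    then have "card ((\<lambda>x. {c,x}) ` ({..<n}-{c}) - \<Union>(A0 k a)) \<le> 1 + (n - (2+a*k))" by (rule card_unc)
    then show ?thesis using r by simp
  qed
  show "\<not> completable k {..<n} (A0 k a)"
    by (rule not_compl[OF P, of 0 1]) (use n unc A0_01[OF k0] in auto)
qed

lemma part2:
  assumes k: "k \<ge> 2" and n: "n = a*k + k + 1"
  shows "\<exists>(V :: nat set) A. card V = n \<and> partial_star_design k V A
               \<and> card A = 2 * a + 1 \<and> \<not> completable k V A"
proof -
  have k0: "k > 0" using k by simp
  define w where "w = 2 + a*k"
  define Lw where "Lw = {0::nat,1} \<union> {w+1..<n}"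
  define W where "W = (\<lambda>x. {w,x}) ` Lw"
  define A where "A = insert W (A0 k a)"
  have wn: "w < n" "n - w = k - 1" using k n unfolding w_def by auto
  have n2: "2 + a*k \<le> n" using n k by simp
  have P0: "partial_star_design k {..<n} (A0 k a)" using A0_psd k0 n2 by blast
  have WA0: "W \<inter> \<Union>(A0 k a) = {}"
  proof (rule ccontr)
    assume "W \<inter> \<Union>(A0 k a) \<noteq> {}"
    then obtain e where e: "e \<in> W" "e \<in> \<Union>(A0 k a)" by blast
    obtain c x where cx: "c \<in> {0,1}" "2 \<le> x" "x < 2 + a*k" "e = {c,x}" using e(2) A0_mem[OF k0] by blast
    obtain y where "e = {w,y}" using e(1) unfolding W_def by blast
    then show False using cx unfolding w_def by (auto simp: doubleton_eq_iff)
  qed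
  have Wne: "W \<noteq> {}" unfolding W_def Lw_def by simp
  have WnA0: "W \<notin> A0 k a" using WA0 Wne by blast
  have cardLw: "card Lw = k"
  proof -
    have "card Lw = card {0::nat,1} + card {w+1..<n}" unfolding Lw_def
      by (rule card_Un_disjoint) (auto simp: w_def)
    then show ?thesis using wn k by simp
  qed
  have Wstar: "is_kstar k {..<n} W" unfolding is_kstar_def
  proof (intro exI conjI)
    show "w \<in> {..<n}" using wn by simp
    show "Lw \<subseteq> {..<n}" unfolding Lw_def using wn unfolding w_def by auto
    show "w \<notin> Lw" unfolding Lw_def w_def by auto
    show "finite Lw" unfolding Lw_def by simp
    show "card Lw = k" by (rule cardLw)
    show "W = {{w, x} |x. x \<in> Lw}" unfolding W_def by (simp add: Setcompr_eq_image)
  qed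
  have P: "partial_star_design k {..<n} A"
    unfolding partial_star_design_def
  proof (intro conjI)
    show "finite {..<n}" by simp
    show "\<forall>S\<in>A. is_kstar k {..<n} S" using P0 Wstar unfolding A_def partial_star_design_def by blast
    show "\<forall>S\<in>A. \<forall>T\<in>A. S \<noteq> T \<longrightarrow> S \<inter> T = {}"
    proof (intro ballI impI)
      fix S T assume ST: "S \<in> A" "T \<in> A" "S \<noteq> T"
      have d0: "\<forall>S\<in>A0 k a. \<forall>T\<in>A0 k a. S \<noteq> T \<longrightarrow> S \<inter> T = {}"
        using P0 unfolding partial_star_design_def by blast
      have dW: "W \<inter> X = {}" "X \<inter> W = {}" if "X \<in> A0 k a" for X using WA0 that by blast+
      show "S \<inter> T = {}"
      proof (cases "S = W")
        case True
        then have "T \<in> A0 k a" using ST unfolding A_def by blast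
        then show ?thesis using dW True by blast
      next
        case False
        then have S0: "S \<in> A0 k a" using ST unfolding A_def by blast
        show ?thesis
        proof (cases "T = W")
          case True
          then show ?thesis using dW S0 by blast
        next
          case False
          then have "T \<in> A0 k a" using ST unfolding A_def by blast
          then show ?thesis using d0 S0 ST(3) by blast
        qed
      qed
    qed
  qed
  have cardA: "card A = 2 * a + 1"
  proof -
    have "finite (A0 k a)" unfolding A0_def by simp
    then have "card A = Suc (card (A0 k a))" unfolding A_def using WnA0 by simp
    then show ?thesis using A0_card[OF k0] by simp
  qed
  have UA: "\<Union>A = W \<union> \<Union>(A0 k a)" unfolding A_def by simp
  have unc: "card ((\<lambda>x. {c,x}) ` ({..<n}-{c}) - \<Union>A) < k" if c: "c \<in> {0,1}" for c
  proof -
    have "(\<lambda>x. {c,x}) ` ({..<n}-{c}) - \<Union>A \<subseteq> (\<lambda>x. {c::nat,x}) ` ({1-c} \<union> {w+1..<n})"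
    proof
      fix e assume e: "e \<in> (\<lambda>x. {c,x}) ` ({..<n}-{c}) - \<Union>A"
      then obtain x where x: "x \<in> {..<n}-{c}" "e = {c,x}" by blast
      have "x \<in> {1-c} \<union> {w+1..<n}"
      proof (rule ccontr)
        assume "x \<notin> {1-c} \<union> {w+1..<n}"
        then have "2 \<le> x" "x \<le> w" using x(1) c by auto
        then consider "x < 2 + a*k" | "x = w" unfolding w_def by linarith
        then have "e \<in> \<Union>A"
        proof cases
          case 1
          then have "e \<in> \<Union>(A0 k a)" using A0_cov[OF k0 c \<open>2 \<le> x\<close>] x(2) by blast
          then show ?thesis using UA by blast
        next
          case 2
          have "c \<in> Lw" using c unfolding Lw_def by blast
          then have "{w,c} \<in> W" unfolding W_def by blast
          then have "e \<in> W" using 2 x(2) by (simp add: insert_commute)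
          then show ?thesis using UA by blast
        qed
        then show False using e by blast
      qed
      then show "e \<in> (\<lambda>x. {c::nat,x}) ` ({1-c} \<union> {w+1..<n})" using x(2) by blast
    qed
    then have "card ((\<lambda>x. {c,x}) ` ({..<n}-{c}) - \<Union>A) \<le> 1 + (n - (w+1))" by (rule card_unc)
    then show ?thesis using wn k by simp
  qed
  have n01: "{0,1} \<notin> \<Union>A"
  proof
    assume "{0,1} \<in> \<Union>A"
    moreover have "{0,1} \<notin> W" unfolding W_def w_def by (auto simp: doubleton_eq_iff)
    ultimately show False using UA A0_01[OF k0] by blast
  qed
  have "\<not> completable k {..<n} A"
    by (rule not_compl[OF P, of 0 1]) (use wn unc n01 in \<open>auto simp: w_def\<close>)
  then show ?thesis using P cardA by (intro exI[of _ "{..<n}"] exI[of _ A]) simp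
qed

theorem lemma3:
  fixes k :: nat
  assumes "k \<ge> 2"
  shows "(\<forall>n. admissible k n \<and> n > 1 \<and> n mod k \<noteq> 1 mod k \<longrightarrow>
            (\<exists>(V :: nat set) A. card V = n \<and> partial_star_design k V A
               \<and> card A = 2 * ((n - 2) div k) \<and> \<not> completable k V A))
       \<and> (\<forall>n. admissible k n \<and> n > 1 \<and> n mod k = 1 mod k \<longrightarrow>
            (\<exists>(V :: nat set) A. card V = n \<and> partial_star_design k V A
               \<and> card A = (2 * n - 2) div k - 1 \<and> \<not> completable k V A))"
proof (intro conjI allI impI)
  fix n assume h: "admissible k n \<and> n > 1 \<and> n mod k \<noteq> 1 mod k"
  define a where "a = (n - 2) div k"
  define r where "r = (n - 2) mod k"
  have k0: "k > 0" using assms by simp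
  have "n \<ge> 2" using h by simp
  have dm: "n - 2 = a*k + r" unfolding a_def r_def by simp
  have rk: "r < k" unfolding r_def using k0 by simp
  have "r \<noteq> k - 1"
  proof
    assume "r = k - 1"
    then have "n = (a+1)*k + 1" using dm \<open>n \<ge> 2\<close> k0 by (simp add: algebra_simps)
    then have "n mod k = 1 mod k" by (metis mod_mult_self3)
    then show False using h by simp
  qed
  then have "n - (2 + a*k) + 1 < k" using dm rk \<open>n \<ge> 2\<close> by simp
  moreover have "2 + a*k \<le> n" using dm \<open>n \<ge> 2\<close> by simp
  ultimately show "\<exists>(V :: nat set) A. card V = n \<and> partial_star_design k V A
               \<and> card A = 2 * ((n - 2) div k) \<and> \<not> completable k V A"
    using part1[OF assms] unfolding a_def by blast
next
  fix n assume h: "admissible k n \<and> n > 1 \<and> n mod k = 1 mod k"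
  define m where "m = n div k"
  have k0: "k > 0" using assms by simp
  have "n mod k = 1" using h assms by simp
  then have nm: "n = m*k + 1" unfolding m_def by (metis div_mult_mod_eq)
  have "m \<noteq> 0" using nm h by auto
  then obtain a where a: "m = Suc a" by (cases m) auto
  have n: "n = a*k + k + 1" using nm a by simp
  have "2*n - 2 = (2*m)*k" using nm by simp
  then have "(2 * n - 2) div k - 1 = 2*a + 1" using k0 a by simp
  then show "\<exists>(V :: nat set) A. card V = n \<and> partial_star_design k V A
               \<and> card A = (2 * n - 2) div k - 1 \<and> \<not> completable k V A"
    using part2[OF assms n] by simp
qed

end
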